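(* Consider the Bayesian forecast reconciliation model: a latent vector $\pmb{x}\in\mathbb{R}^N$ with prior density $p(\pmb{x})$ given by the forecast distribution $\Theta$, a nuisance latent variable $u\mid\pmb{x}\sim\delta(f(\pmb{x}))$ for $f:\mathbb{R}^N\to\mathbb{R}^M$, $M\le N$, and an observation $y$ giving soft evidence $u\mid y\sim\mathrm{H}$, so that $$p(\pmb{x}\mid y)=p(\pmb{x})\,\frac{p(u=f(\pmb{x})\mid y)}{p(u=f(\pmb{x}))},\qquad p(u)=\int\delta(u-f(\pmb{x}))p(\pmb{x})\,d\pmb{x}.$$ Let $f(\pmb{x})=A\pmb{x}$ for an $M\times N$ matrix $A$, and let the forecast distributions $\Theta$ and $\mathrm{H}$ be Gaussian with parameters $(\pmb{\mu}_\theta,\Sigma_\theta)$ and $(\pmb{\mu}_\eta,\Sigma_\eta)$ respectively, i.e. $p(\pmb{x})=p_{\mathcal{N}}(\pmb{x}\mid\pmb{\mu}_\theta,\Sigma_\theta)$ and $p(f(\pmb{x})\mid y)=p_{\mathcal{N}}(f(\pmb{x})\mid\pmb{\mu}_\eta,\Sigma_\eta)$. Then $$p(\pmb{x}\mid y)\propto p_{\mathcal{N}}(\pmb{x}\mid\pmb{\mu}_{LG},\Sigma_{LG}),$$ where $$\Sigma_{LG}=\left(\Sigma_\theta^{-1}+A^T\left[\Sigma_\eta^{-1}-(A\Sigma_\theta A^T)^{-1}\right]A\right)^{-1},\qquad \pmb{\mu}_{LG}=\pmb{\mu}_\theta+\Sigma_{LG}A^T\Sigma_\eta^{-1}(\p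mb{\mu}_\eta-A\pmb{\mu}_\theta).$$
   Context: Forecast reconciliation setting: $N$ subsystems with parameters of interest $x_i\in\mathbb{R}$ forming $\pmb{x}\in\mathbb{R}^N$; forecasts are given for $\pmb{x}$ (prior distribution $\Theta$, constructed from the per-component forecasts) and for the summary statistic $u=f(\pmb{x})$ (distribution $\mathrm{H}$). In the Bayesian network, $\pmb{x}\to u$ with Dirac delta conditional $p(u\mid\pmb{x})=\delta(u-f(\pmb{x}))$, and $y$ provides soft evidence about $u$, meaning the posterior $u\mid y\sim\mathrm{H}$ is specified. $p_{\mathcal{N}}(\cdot\mid\pmb{\mu},\Sigma)$ denotes the multivariate Gaussian density with mean $\pmb{\mu}$ and covariance $\Sigma$. *)

theory Defs
  imports "HOL-Probability.Probability"
begin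

definition pos_def_mat :: "real ^ 'n ^ 'n \<Rightarrow> bool" where
  "pos_def_mat S \<longleftrightarrow> transpose S = S \<and> (\<forall>x. x \<noteq> 0 \<longrightarrow> x \<bullet> (S *v x) > 0)"

definition gauss_pdf :: "real ^ 'n \<Rightarrow> real ^ 'n ^ 'n \<Rightarrow> real ^ 'n \<Rightarrow> real" where
  "gauss_pdf mu S x =
     exp (- (1/2) * ((x - mu) \<bullet> (matrix_inv S *v (x - mu))))
     / sqrt ((2 * pi) ^ CARD('n) * det S)"

end

theory Submission
  imports Defs
begin

lemma pd_inj:
  fixes S :: "real^'n^'n"
  assumes "pos_def_mat S" shows "inj ((*v) S)"
proof (rule injI)
  fix x y assume "S *v x = S *v y"
  then have "S *v (x - y) = 0" by (simp add: matrix_vector_mult_diff_distrib)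
  then have "(x - y) \<bullet> (S *v (x - y)) = 0" by simp
  then show "x = y" using assms unfolding pos_def_mat_def by (metis less_irrefl right_minus_eq)
qed

lemma pd_invertible:
  fixes S :: "real^'n^'n"
  assumes "pos_def_mat S" shows "invertible S"
  using pd_inj[OF assms] matrix_left_invertible_injective invertible_left_inverse by blast

lemma matrix_inv_props:
  fixes S :: "real^'n^'n"
  assumes "invertible S"
  shows "S ** matrix_inv S = mat 1" "matrix_inv S ** S = mat 1"
proof -
  have "\<exists>A'. S ** A' = mat 1 \<and> A' ** S = mat 1" using assms unfolding invertible_def by blast
  from someI_ex[OF this] show "S ** matrix_inv S = mat 1" "matrix_inv S ** S = mat 1"
    unfolding matrix_inv_def by auto
qed

lemma matrix_inv_inv:
  fixes S :: "real^'n^'n"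
  assumes "invertible S"
  shows "invertible (matrix_inv S)" "matrix_inv (matrix_inv S) = S"
proof -
  show i: "invertible (matrix_inv S)" using matrix_inv_props[OF assms] unfolding invertible_def by blast
  have "matrix_inv (matrix_inv S) = matrix_inv (matrix_inv S) ** (matrix_inv S ** S)"
    using matrix_inv_props[OF assms] by simp
  also have "\<dots> = (matrix_inv (matrix_inv S) ** matrix_inv S) ** S" by (simp add: matrix_mul_assoc)
  also have "\<dots> = S" using matrix_inv_props[OF i] by simp
  finally show "matrix_inv (matrix_inv S) = S" .
qed

lemma matrix_inv_vec:
  fixes S :: "real^'n^'n"
  assumes "invertible S"
  shows "S *v (matrix_inv S *v x) = x" "matrix_inv S *v (S *v x) = x"
  using matrix_inv_props[OF assms] by (simp_all add: matrix_vector_mul_assoc)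

lemma matrix_inv_transpose:
  fixes S :: "real^'n^'n"
  assumes "invertible S"
  shows "matrix_inv (transpose S) = transpose (matrix_inv S)"
proof -
  have i: "invertible (transpose S)"
    using matrix_inv_props[OF assms] unfolding invertible_def
    by (metis matrix_transpose_mul transpose_mat)
  have "transpose S ** transpose (matrix_inv S) = mat 1"
    using matrix_inv_props[OF assms] by (metis matrix_transpose_mul transpose_mat)
  then have "matrix_inv (transpose S) ** (transpose S ** transpose (matrix_inv S)) = matrix_inv (transpose S)"
    by simp
  then show ?thesis using matrix_inv_props[OF i] by (simp add: matrix_mul_assoc)
qed

lemma sym_inner:
  fixes S :: "real^'n^'n"
  assumes "transpose S = S"
  shows "x \<bullet> (S *v y) = y \<bullet> (S *v x)"
  by (metis assms dot_lmul_matrix inner_commute transpose_matrix_vector)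

lemma pd_matrix_inv:
  fixes S :: "real^'n^'n"
  assumes "pos_def_mat S" shows "pos_def_mat (matrix_inv S)"
proof -
  have i: "invertible S" by (rule pd_invertible[OF assms])
  have s: "transpose S = S" using assms pos_def_mat_def by blast
  show ?thesis unfolding pos_def_mat_def
  proof safe
    show "transpose (matrix_inv S) = matrix_inv S" using matrix_inv_transpose[OF i] s by simp
  next
    fix x :: "real^'n" assume x: "x \<noteq> 0"
    define y where "y = matrix_inv S *v x"
    have xy: "x = S *v y" using matrix_inv_vec[OF i] y_def by simp
    have "y \<noteq> 0" proof assume "y = 0" then show False using x xy by simp qed
    then have "y \<bullet> (S *v y) > 0" using assms pos_def_mat_def by blast
    moreover have "x \<bullet> (matrix_inv S *v x) = (S *v y) \<bullet> y" unfolding y_def[symmetric] by (subst xy) (rule refl)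
    ultimately show "x \<bullet> (matrix_inv S *v x) > 0" by (simp add: inner_commute)
  qed
qed


lemma pd_det_pos:
  fixes S :: "real^'n^'n"
  assumes "pos_def_mat S" shows "det S > 0"
proof (rule ccontr)
  assume "\<not> det S > 0"
  define M where "M t = (1 - t) *\<^sub>R (mat 1 :: real^'n^'n) + t *\<^sub>R S" for t :: real
  have cont: "continuous_on {0..1} (\<lambda>t. det (M t))"
    unfolding M_def det_def
    by (intro continuous_intros)
  have M0: "det (M 0) = 1" by (simp add: M_def)
  have M1: "det (M 1) \<le> 0" using \<open>\<not> det S > 0\<close> by (simp add: M_def)
  obtain t where t: "t \<in> {0..1}" "det (M t) = 0"
    using IVT2'[of "\<lambda>t. det (M t)" 1 0 0] cont M0 M1 by auto
  have "inj ((*v) (M t))"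
  proof (rule injI)
    fix x y assume "M t *v x = M t *v y"
    then have e: "M t *v (x - y) = 0" by (simp add: matrix_vector_mult_diff_distrib)
    show "x = y"
    proof (rule ccontr)
      assume "x \<noteq> y"
      then have nz: "x - y \<noteq> 0" by simp
      have "M t *v (x - y) = (1 - t) *\<^sub>R (x - y) + t *\<^sub>R (S *v (x - y))"
        by (simp add: M_def scaleR_matrix_vector_assoc[symmetric] matrix_vector_mult_add_rdistrib)
      then have "(x - y) \<bullet> ((1 - t) *\<^sub>R (x - y) + t *\<^sub>R (S *v (x - y))) = 0"
        using e by simp
      then have "0 = (1 - t) * ((x - y) \<bullet> (x - y)) + t * ((x - y) \<bullet> (S *v (x - y)))"
        by (simp add: inner_add_right)
      moreover have "(x - y) \<bullet> (S *v (x - y)) > 0" using assms nz pos_def_mat_def by blast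
      moreover have "(x - y) \<bullet> (x - y) > 0" using nz by simp
      ultimately show False using t(1)
        by (smt (verit, best) atLeastAtMost_iff mult_nonneg_nonneg mult_pos_pos)
    qed
  qed
  then have "det (M t) \<noteq> 0"
    using det_nz_iff_inj[of "(*v) (M t)"] by (simp add: matrix_vector_mul_linear)
  then show False using t by simp
qed


lemma inner_transpose:
  fixes A :: "real^'n^'m"
  shows "x \<bullet> (transpose A *v y) = (A *v x) \<bullet> y"
  by (metis dot_lmul_matrix inner_commute transpose_matrix_vector)

lemma transpose_add: "transpose (A + B) = transpose A + transpose (B::real^'n^'m)"
  by (simp add: transpose_def vec_eq_iff)
lemma transpose_diff: "transpose (A - B) = transpose A - transpose (B::real^'n^'m)"
  by (simp add: transpose_def vec_eq_iff)

lemma inner_vmul: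
  fixes A :: "real^'n^'m"
  shows "x \<bullet> (y v* A) = (A *v x) \<bullet> y"
  by (metis dot_lmul_matrix inner_commute)

lemma vmul_sym:
  fixes S :: "real^'n^'n"
  assumes "transpose S = S" shows "y v* S = S *v y"
  by (metis assms transpose_matrix_vector)

lemma B_pd:
  fixes A :: "real^'n^'m" and S :: "real^'n^'n"
  assumes "pos_def_mat S" "inj ((*v) (transpose A))"
  shows "pos_def_mat (A ** S ** transpose A)"
  unfolding pos_def_mat_def
proof safe
  have "transpose S = S" using assms pos_def_mat_def by blast
  then show "transpose (A ** S ** transpose A) = A ** S ** transpose A"
    by (simp add: matrix_transpose_mul matrix_mul_assoc)
next
  fix x :: "real^'m" assume "x \<noteq> 0"
  then have "transpose A *v x \<noteq> 0" using assms(2)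
    by (metis injD matrix_vector_mult_0_right)
  then have "(transpose A *v x) \<bullet> (S *v (transpose A *v x)) > 0"
    using assms(1) pos_def_mat_def by blast
  moreover have "x \<bullet> ((A ** S ** transpose A) *v x) = (transpose A *v x) \<bullet> (S *v (transpose A *v x))"
    using vmul_sym[of S] assms(1) unfolding pos_def_mat_def
    by (simp add: matrix_vector_mul_assoc[symmetric] inner_commute[of x] inner_transpose[symmetric])
  ultimately show "x \<bullet> ((A ** S ** transpose A) *v x) > 0" by simp
qed

lemma P_pd:
  fixes A :: "real^'n^'m" and S :: "real^'n^'n" and E :: "real^'m^'m"
  assumes S: "pos_def_mat S" and E: "pos_def_mat E" and inj: "inj ((*v) (transpose A))"
  shows "pos_def_mat (matrix_inv S + transpose A ** (matrix_inv E - matrix_inv (A ** S ** transpose A)) ** A)"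
proof -
  define B where "B = A ** S ** transpose A"
  have B: "pos_def_mat B" using B_pd[OF S inj] B_def by simp
  have Si: "pos_def_mat (matrix_inv S)" by (rule pd_matrix_inv[OF S])
  have Ei: "pos_def_mat (matrix_inv E)" by (rule pd_matrix_inv[OF E])
  have Bi: "pos_def_mat (matrix_inv B)" by (rule pd_matrix_inv[OF B])
  have iS: "invertible S" by (rule pd_invertible[OF S])
  have iB: "invertible B" by (rule pd_invertible[OF B])
  have tSi: "transpose (matrix_inv S) = matrix_inv S" using Si pos_def_mat_def by blast
  have tEi: "transpose (matrix_inv E) = matrix_inv E" using Ei pos_def_mat_def by blast
  have tBi: "transpose (matrix_inv B) = matrix_inv B" using Bi pos_def_mat_def by blast
  let ?P = "matrix_inv S + transpose A ** (matrix_inv E - matrix_inv B) ** A"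
  have quad: "x \<bullet> (?P *v x) = x \<bullet> (matrix_inv S *v x) + (A *v x) \<bullet> (matrix_inv E *v (A *v x))
      - (A *v x) \<bullet> (matrix_inv B *v (A *v x))" for x
    by (simp add: matrix_vector_mult_add_rdistrib matrix_vector_mult_diff_rdistrib
        matrix_vector_mul_assoc[symmetric] inner_add_right inner_diff_right inner_transpose
        matrix_vector_mult_diff_distrib inner_vmul)
  have key: "x \<bullet> (matrix_inv S *v x) - (A *v x) \<bullet> (matrix_inv B *v (A *v x)) \<ge> 0" for x
  proof -
    define z where "z = matrix_inv B *v (A *v x)"
    define w where "w = S *v (transpose A *v z)"
    have Siw: "matrix_inv S *v w = transpose A *v z" using matrix_inv_vec[OF iS] w_def by simp
    have Bz: "B *v z = A *v x" using matrix_inv_vec[OF iB] z_def by simp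
    have Aw: "A *v w = B *v z" by (simp add: w_def B_def matrix_vector_mul_assoc matrix_mul_assoc del: transpose_matrix_vector)
    have e1: "w \<bullet> (matrix_inv S *v x) = (A *v x) \<bullet> z"
      using sym_inner[OF tSi, of w x] Siw by (simp add: inner_transpose inner_vmul)
    have e2: "w \<bullet> (matrix_inv S *v w) = (A *v x) \<bullet> z"
      using Siw Aw Bz by (simp add: inner_transpose inner_vmul)
    have e3: "x \<bullet> (matrix_inv S *v w) = (A *v x) \<bullet> z"
      using Siw by (simp add: inner_transpose inner_vmul)
    have "(x - w) \<bullet> (matrix_inv S *v (x - w)) \<ge> 0"
      using Si unfolding pos_def_mat_def by (metis inner_zero_left less_eq_real_def)
    moreover have "(x - w) \<bullet> (matrix_inv S *v (x - w)) = x \<bullet> (matrix_inv S *v x) - (A *v x) \<bullet> z"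
      using e1 e2 e3 by (simp add: matrix_vector_mult_diff_distrib inner_diff_left inner_diff_right)
    ultimately show ?thesis by (simp add: z_def)
  qed
  show ?thesis unfolding B_def[symmetric] pos_def_mat_def
  proof safe
    show "transpose ?P = ?P"
      by (simp add: transpose_add transpose_diff matrix_transpose_mul tSi tEi tBi matrix_mul_assoc)
  next
    fix x :: "real^'n" assume x: "x \<noteq> 0"
    show "x \<bullet> (?P *v x) > 0"
    proof (cases "A *v x = 0")
      case True
      then show ?thesis using quad[of x] Si x unfolding pos_def_mat_def by simp
    next
      case False
      then have "(A *v x) \<bullet> (matrix_inv E *v (A *v x)) > 0" using Ei unfolding pos_def_mat_def by blast
      then show ?thesis using quad[of x] key[of x] by simp
    qed
  qed
qed


lemma distr_lborel_plus:
  fixes v :: "'a::euclidean_space"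
  shows "distr lborel lborel ((+) v) = lborel"
proof -
  have "distr lborel lborel ((+) v) = distr lborel borel ((+) v)"
    by (rule distr_cong) auto
  then show ?thesis by (simp add: lborel_distr_plus)
qed

lemma distr_density_shift:
  fixes v :: "'a::euclidean_space" and G :: "'a \<Rightarrow> ennreal"
  assumes [measurable]: "G \<in> borel_measurable borel"
  shows "distr (density lborel G) lborel ((+) v) = density lborel (\<lambda>x. G (x - v))"
proof -
  have "distr (density (distr lborel lborel ((+) (- v))) G) lborel ((+) v) = density lborel (G \<circ> ((+) (- v)))"
    by (rule distr_density_distr) auto
  then show ?thesis by (simp add: distr_lborel_plus comp_def)
qed

lemma distr_lborel_reflect:
  fixes u0 :: "'a::euclidean_space"
  shows "distr lborel lborel (\<lambda>x. u0 - x) = lborel"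
proof -
  have "lborel = density (distr lborel borel (\<lambda>x. u0 + (-1) *\<^sub>R x)) (\<lambda>_. \<bar>-1::real\<bar>^DIM('a))"
    by (rule lborel_affine) simp
  then have "lborel = distr lborel borel (\<lambda>x. u0 - x)" by (simp add: density_1)
  moreover have "distr lborel lborel (\<lambda>x. u0 - x) = distr lborel borel (\<lambda>x. u0 - x)"
    by (rule distr_cong) auto
  ultimately show ?thesis by simp
qed

lemma AE_lborel_ex:
  assumes "AE x in (lborel::'a::euclidean_space measure). P x" shows "\<exists>x. P x"
proof (rule ccontr)
  assume "\<not> (\<exists>x. P x)"
  from assms obtain N where N: "{x \<in> space lborel. \<not> P x} \<subseteq> N" "emeasure lborel N = 0" "N \<in> sets lborel"
    by (rule AE_E)
  then have "UNIV \<subseteq> N" using \<open>\<not> (\<exists>x. P x)\<close> by auto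
  then have "emeasure lborel (UNIV::'a set) \<le> emeasure lborel N" using N(3) by (intro emeasure_mono) auto
  then show False using N(2) by (simp add: emeasure_lborel_UNIV)
qed

lemma AE_shift_const:
  fixes H :: "'a::euclidean_space \<Rightarrow> ennreal"
  assumes [measurable]: "H \<in> borel_measurable borel"
  assumes inv: "\<And>a. AE u in lborel. H (u - a) = H u"
  shows "\<exists>C. AE u in lborel. H u = C"
proof -
  have ms: "{x \<in> space (lborel \<Otimes>\<^sub>M lborel). H (snd x - fst x) = H (snd x)} \<in> sets (lborel \<Otimes>\<^sub>M (lborel::'a measure))"
    by measurable
  have "AE a in lborel. AE u in lborel. H (u - a) = H u" using inv by simp
  then have "AE u in lborel. AE a in lborel. H (u - a) = H u"
    using lborel_pair.AE_commute[OF ms] by simp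
  then obtain u0 where u0: "AE a in lborel. H (u0 - a) = H u0"
    using AE_lborel_ex by blast
  have "AE w in distr lborel lborel (\<lambda>x. u0 - x). H w = H u0"
    by (subst AE_distr_iff) (use u0 in auto)
  then have "AE w in lborel. H w = H u0" by (metis distr_lborel_reflect)
  then show ?thesis by blast
qed


lemma quad_shift:
  fixes K :: "real^'n^'n"
  assumes "transpose K = K"
  shows "(y - w) \<bullet> (K *v (y - w)) = y \<bullet> (K *v y) - 2 * (w \<bullet> (K *v y)) + w \<bullet> (K *v w)"
  using sym_inner[OF assms, of y w]
  by (simp add: matrix_vector_mult_diff_distrib inner_diff_left inner_diff_right)

lemma exp_quad_shift:
  fixes K :: "real^'n^'n"
  assumes "transpose K = K"
  shows "exp (- (1/2) * ((y - w) \<bullet> (K *v (y - w)))) =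
         exp (- (1/2) * (y \<bullet> (K *v y))) * exp (w \<bullet> (K *v y) - (1/2) * (w \<bullet> (K *v w)))"
  unfolding quad_shift[OF assms] exp_add[symmetric] by (simp add: algebra_simps)

lemma cont_mv: "continuous_on S (f::'a::euclidean_space \<Rightarrow> real^'n) \<Longrightarrow> continuous_on S (\<lambda>x. (M::real^'n^'m) *v f x)"
  using linear_continuous_on_compose[of S f "(*v) M"] matrix_vector_mul_linear[of M] by simp

lemma meas_mv[measurable]: "(\<lambda>x. (M::real^'n^'m) *v x) \<in> borel_measurable borel"
  by (rule borel_measurable_continuous_onI, rule cont_mv, rule continuous_on_id)

lemma gauss_exp_meas[measurable]:
  "(\<lambda>x. exp (- (1/2) * ((x - mu) \<bullet> ((M::real^'n^'n) *v (x - mu))))) \<in> borel_measurable borel"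
  by (rule borel_measurable_continuous_onI) (intro continuous_intros cont_mv)

lemma gauss_meas[measurable]: "gauss_pdf mu S \<in> borel_measurable borel"
  unfolding gauss_pdf_def[abs_def] by measurable


lemma marginal:
  fixes A :: "real^'n^'m" and S :: "real^'n^'n" and mu :: "real^'n" and Pu :: "real^'m \<Rightarrow> ennreal"
  assumes S: "pos_def_mat S" and inj: "inj ((*v) (transpose A))"
    and Pu[measurable]: "Pu \<in> borel_measurable borel"
    and Pufin: "\<And>u. Pu u \<noteq> \<infinity>"
    and D: "distr (density lborel (\<lambda>x. ennreal (gauss_pdf mu S x))) lborel (\<lambda>x. A *v x) = density lborel Pu"
  shows "\<exists>C>0. AE x in lborel. Pu (A *v x) = ennreal (C * exp (- (1/2) * ((A *v x - A *v mu) \<bullet>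
            (matrix_inv (A ** S ** transpose A) *v (A *v x - A *v mu)))))"
proof -
  define B where "B = A ** S ** transpose A"
  define Bi where "Bi = matrix_inv B"
  define Si where "Si = matrix_inv S"
  define g where "g = gauss_pdf mu S"
  define q0 where "q0 u = exp (- (1/2) * ((u - A *v mu) \<bullet> (Bi *v (u - A *v mu))))" for u
  define psi where "psi a u = exp (a \<bullet> (Bi *v (u - A *v mu)) - (1/2) * (a \<bullet> (Bi *v a)))" for a u
  define vv where "vv a = S *v (transpose A *v (Bi *v a))" for a
  define M where "M = density lborel (\<lambda>x. ennreal (g x))"
  have Bpd: "pos_def_mat B" using B_pd[OF S inj] B_def by simp
  have iS: "invertible S" by (rule pd_invertible[OF S])
  have iB: "invertible B" by (rule pd_invertible[OF Bpd])
  have tSi: "transpose Si = Si" using pd_matrix_inv[OF S] Si_def pos_def_mat_def by blast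
  have tBi: "transpose Bi = Bi" using pd_matrix_inv[OF Bpd] Bi_def pos_def_mat_def by blast
  have g_meas[measurable]: "g \<in> borel_measurable borel" unfolding g_def by measurable
  have q0_meas[measurable]: "q0 \<in> borel_measurable borel" unfolding q0_def[abs_def] by measurable
  have psi_meas[measurable]: "psi a \<in> borel_measurable borel" for a
    unfolding psi_def[abs_def]
    by (rule borel_measurable_continuous_onI) (intro continuous_intros cont_mv)
  have detS: "det S > 0" by (rule pd_det_pos[OF S])
  have gpos: "g x > 0" for x
    unfolding g_def gauss_pdf_def using detS by (intro divide_pos_pos) auto
  have q0pos: "q0 u > 0" for u unfolding q0_def by simp
  have psipos: "psi a u > 0" for a u unfolding psi_def by simp
  have Avv: "A *v vv a = a" for a
    using matrix_inv_vec(1)[OF iB, of a]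
    by (simp add: vv_def B_def Bi_def matrix_vector_mul_assoc matrix_mul_assoc del: transpose_matrix_vector)
  have Sivv: "Si *v vv a = transpose A *v (Bi *v a)" for a
    using matrix_inv_vec(2)[OF iS] by (simp add: vv_def Si_def del: transpose_matrix_vector)
  have F1: "g (x - vv a) = g x * psi a (A *v x)" for x a
  proof -
    have e: "x - vv a - mu = (x - mu) - vv a" by (simp add: algebra_simps)
    have i1: "vv a \<bullet> (Si *v (x - mu)) = a \<bullet> (Bi *v (A *v x - A *v mu))"
    proof -
      have "vv a \<bullet> (Si *v (x - mu)) = (x - mu) \<bullet> (Si *v vv a)" by (rule sym_inner[OF tSi])
      also have "\<dots> = (A *v (x - mu)) \<bullet> (Bi *v a)" unfolding Sivv by (rule inner_transpose)
      also have "\<dots> = a \<bullet> (Bi *v (A *v (x - mu)))" by (rule sym_inner[OF tBi])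
      finally show ?thesis by (simp add: matrix_vector_mult_diff_distrib)
    qed
    have i2: "vv a \<bullet> (Si *v vv a) = a \<bullet> (Bi *v a)"
    proof -
      have "vv a \<bullet> (Si *v vv a) = (A *v vv a) \<bullet> (Bi *v a)" unfolding Sivv by (rule inner_transpose)
      then show ?thesis by (simp add: Avv inner_commute)
    qed
    show ?thesis
      unfolding g_def gauss_pdf_def e exp_quad_shift[OF tSi[unfolded Si_def]]
      using i1 i2 by (simp add: psi_def Si_def)
  qed
  have F2: "q0 (u - a) = q0 u * psi a u" for u a
  proof -
    have e: "u - a - A *v mu = (u - A *v mu) - a" by (simp add: algebra_simps)
    show ?thesis unfolding q0_def psi_def e exp_quad_shift[OF tBi] ..
  qed
  have shift: "AE u in lborel. Pu (u - a) = Pu u * ennreal (psi a u)" for a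
  proof -
    define v where "v = vv a"
    have Av: "A *v v = a" using Avv v_def by simp
    have e1: "distr M lborel ((+) v) = density M (\<lambda>x. ennreal (psi a (A *v x)))"
    proof -
      have "distr M lborel ((+) v) = density lborel (\<lambda>x. ennreal (g (x - v)))"
        unfolding M_def by (rule distr_density_shift) measurable
      also have "\<dots> = density lborel (\<lambda>x. ennreal (g x) * ennreal (psi a (A *v x)))"
        using gpos psipos by (simp add: F1 v_def ennreal_mult less_imp_le)
      also have "\<dots> = density M (\<lambda>x. ennreal (psi a (A *v x)))"
        unfolding M_def by (rule density_density_eq[symmetric]) measurable
      finally show ?thesis .
    qed
    have e2: "distr (distr M lborel ((+) v)) lborel (\<lambda>x. A *v x) = density lborel (\<lambda>u. Pu (u - a))"
    proof -
      have "distr (distr M lborel ((+) v)) lborel (\<lambda>x. A *v x) = distr M lborel ((\<lambda>x. A *v x) \<circ> (+) v)"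
        by (rule distr_distr) (auto simp: M_def)
      also have "((\<lambda>x. A *v x) \<circ> (+) v) = ((+) a) \<circ> (\<lambda>x. A *v x)"
        by (auto simp: Av matrix_vector_right_distrib)
      also have "distr M lborel (((+) a) \<circ> (\<lambda>x. A *v x)) = distr (distr M lborel (\<lambda>x. A *v x)) lborel ((+) a)"
        by (rule distr_distr[symmetric]) (auto simp: M_def)
      also have "\<dots> = density lborel (\<lambda>u. Pu (u - a))"
        unfolding M_def g_def D by (rule distr_density_shift) measurable
      finally show ?thesis .
    qed
    have e3: "distr (density M (\<lambda>x. ennreal (psi a (A *v x)))) lborel (\<lambda>x. A *v x)
        = density lborel (\<lambda>u. Pu u * ennreal (psi a u))"
    proof -
      have "distr (density M (\<lambda>x. ennreal (psi a (A *v x)))) lborel (\<lambda>x. A *v x)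
          = density (distr M lborel (\<lambda>x. A *v x)) (\<lambda>u. ennreal (psi a u))"
        by (rule density_distr[symmetric]) (auto simp: M_def)
      also have "\<dots> = density (density lborel Pu) (\<lambda>u. ennreal (psi a u))"
        unfolding M_def g_def D ..
      also have "\<dots> = density lborel (\<lambda>u. Pu u * ennreal (psi a u))"
        by (rule density_density_eq) auto
      finally show ?thesis .
    qed
    have "density lborel (\<lambda>u. Pu (u - a)) = density lborel (\<lambda>u. Pu u * ennreal (psi a u))"
      using e1 e2 e3 by simp
    then show ?thesis by (intro sigma_finite_measure.density_unique[OF sigma_finite_lborel]) auto
  qed
  define H where "H u = Pu u * ennreal (1 / q0 u)" for u
  have H_meas[measurable]: "H \<in> borel_measurable borel" unfolding H_def[abs_def] by measurable
  have Hinv: "AE u in lborel. H (u - a) = H u" for a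
    using shift[of a]
  proof eventually_elim
    case (elim u)
    have "ennreal (psi a u) * ennreal (1 / q0 (u - a)) = ennreal (psi a u * (1 / q0 (u - a)))"
      using psipos[of a u] q0pos[of "u - a"] by (subst ennreal_mult[symmetric]) auto
    also have "psi a u * (1 / q0 (u - a)) = 1 / q0 u"
      unfolding F2 using psipos[of a u] q0pos[of u] by (simp add: field_simps)
    finally show ?case unfolding H_def elim by (simp add: mult.assoc)
  qed
  obtain C where C: "AE u in lborel. H u = C" using AE_shift_const[OF H_meas Hinv] by blast
  have PuC: "AE u in lborel. Pu u = C * ennreal (q0 u)"
    using C
  proof eventually_elim
    case (elim u)
    have "ennreal (1 / q0 u) * ennreal (q0 u) = 1"
      using q0pos[of u] by (subst ennreal_mult[symmetric]) auto
    then have "Pu u = H u * ennreal (q0 u)"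
      unfolding H_def by (simp add: mult.assoc)
    then show ?case using elim by simp
  qed
  have Cfin: "C \<noteq> \<infinity>"
  proof
    assume "C = \<infinity>"
    obtain u where "Pu u = C * ennreal (q0 u)" using AE_lborel_ex[OF PuC] by blast
    then show False using \<open>C = \<infinity>\<close> q0pos[of u] Pufin[of u] by (simp add: ennreal_top_mult)
  qed
  have Cnz: "C \<noteq> 0"
  proof
    assume "C = 0"
    then have "AE u in lborel. Pu u = 0" using PuC by simp
    then have "density lborel Pu = density lborel (\<lambda>_. 0)" by (intro density_cong) auto
    then have "emeasure (distr M lborel (\<lambda>x. A *v x)) UNIV = 0"
      unfolding M_def g_def D by (simp add: emeasure_density)
    then have "emeasure M UNIV = 0" by (simp add: emeasure_distr M_def)
    then have "(\<integral>\<^sup>+ x. ennreal (g x) \<partial>lborel) = 0" by (simp add: M_def emeasure_density)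
    then have "AE x in lborel. ennreal (g x) = 0" by (subst (asm) nn_integral_0_iff_AE) auto
    then obtain x where "ennreal (g x) = 0" using AE_lborel_ex by blast
    then show False using gpos[of x] by simp
  qed
  define c0 where "c0 = enn2real C"
  have c0pos: "c0 > 0" using Cfin Cnz by (simp add: c0_def enn2real_positive_iff top.not_eq_extremum zero_less_iff_neq_zero)
  have Cc0: "C = ennreal c0" using Cfin by (simp add: c0_def ennreal_enn2real_if)
  have PuC': "AE u in lborel. Pu u = ennreal (c0 * q0 u)"
    using PuC by eventually_elim (simp add: Cc0 ennreal_mult c0pos q0pos less_imp_le)
  then have "AE u in density lborel Pu. Pu u = ennreal (c0 * q0 u)"
    by (subst AE_density) (auto elim: eventually_mono)
  then have "AE u in distr M lborel (\<lambda>x. A *v x). Pu u = ennreal (c0 * q0 u)"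
    unfolding M_def g_def D .
  then have "AE x in M. Pu (A *v x) = ennreal (c0 * q0 (A *v x))"
    by (subst (asm) AE_distr_iff) (auto simp: M_def)
  then have "AE x in lborel. 0 < ennreal (g x) \<longrightarrow> Pu (A *v x) = ennreal (c0 * q0 (A *v x))"
    unfolding M_def by (subst (asm) AE_density) auto
  then have "AE x in lborel. Pu (A *v x) = ennreal (c0 * q0 (A *v x))"
    by eventually_elim (use gpos in auto)
  then show ?thesis using c0pos unfolding q0_def Bi_def B_def by blast
qed


lemma quad_identity:
  fixes A :: "real^'n^'m" and S :: "real^'n^'n" and E :: "real^'m^'m" and mu x :: "real^'n" and mue :: "real^'m"
  assumes S: "pos_def_mat S" and E: "pos_def_mat E" and inj: "inj ((*v) (transpose A))"
  defines "Pm \<equiv> matrix_inv S + transpose A ** (matrix_inv E - matrix_inv (A ** S ** transpose A)) ** A"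
  defines "b \<equiv> transpose A *v (matrix_inv E *v (mue - A *v mu))"
  shows "(x - mu) \<bullet> (matrix_inv S *v (x - mu)) + (A *v x - mue) \<bullet> (matrix_inv E *v (A *v x - mue))
     - (A *v x - A *v mu) \<bullet> (matrix_inv (A ** S ** transpose A) *v (A *v x - A *v mu))
     = (x - (mu + matrix_inv Pm *v b)) \<bullet> (Pm *v (x - (mu + matrix_inv Pm *v b)))
       + ((mue - A *v mu) \<bullet> (matrix_inv E *v (mue - A *v mu)) - b \<bullet> (matrix_inv Pm *v b))"
proof -
  define B where "B = A ** S ** transpose A"
  define Si where "Si = matrix_inv S"
  define Ei where "Ei = matrix_inv E"
  define Bi where "Bi = matrix_inv B"
  define SLG where "SLG = matrix_inv Pm"
  define d where "d = mue - A *v mu"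
  define y where "y = x - mu"
  have Ppd: "pos_def_mat Pm" unfolding Pm_def by (rule P_pd[OF S E inj])
  have iP: "invertible Pm" by (rule pd_invertible[OF Ppd])
  have tP: "transpose Pm = Pm" using Ppd pos_def_mat_def by blast
  have tEi: "transpose Ei = Ei" using pd_matrix_inv[OF E] Ei_def pos_def_mat_def by blast
  have Pm_exp: "Pm = Si + transpose A ** (Ei - Bi) ** A" unfolding Pm_def Si_def Ei_def Bi_def B_def ..
  have b_def': "b = transpose A *v (Ei *v d)" unfolding b_def Ei_def d_def ..
  have xm: "x - (mu + SLG *v b) = y - SLG *v b" unfolding y_def by (simp add: algebra_simps)
  have Ax1: "A *v x - mue = A *v y - d" unfolding y_def d_def by (simp add: matrix_vector_mult_diff_distrib algebra_simps)
  have Ax2: "A *v x - A *v mu = A *v y" unfolding y_def by (simp add: matrix_vector_mult_diff_distrib)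
  have PSb: "Pm *v (SLG *v b) = b" unfolding SLG_def by (rule matrix_inv_vec(1)[OF iP])
  have qy: "y \<bullet> (Pm *v y) = y \<bullet> (Si *v y) + (A *v y) \<bullet> (Ei *v (A *v y)) - (A *v y) \<bullet> (Bi *v (A *v y))"
    unfolding Pm_exp
    by (simp add: matrix_vector_mult_add_rdistrib matrix_vector_mult_diff_rdistrib
        matrix_vector_mul_assoc[symmetric] inner_add_right inner_diff_right inner_transpose
        matrix_vector_mult_diff_distrib inner_vmul)
  have qe: "(A *v y - d) \<bullet> (Ei *v (A *v y - d)) = (A *v y) \<bullet> (Ei *v (A *v y)) - 2 * (d \<bullet> (Ei *v (A *v y))) + d \<bullet> (Ei *v d)"
    by (rule quad_shift[OF tEi])
  have qm: "(y - SLG *v b) \<bullet> (Pm *v (y - SLG *v b)) = y \<bullet> (Pm *v y) - 2 * ((SLG *v b) \<bullet> (Pm *v y)) + (SLG *v b) \<bullet> (Pm *v (SLG *v b))"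
    by (rule quad_shift[OF tP])
  have c1: "(SLG *v b) \<bullet> (Pm *v y) = d \<bullet> (Ei *v (A *v y))"
  proof -
    have "(SLG *v b) \<bullet> (Pm *v y) = y \<bullet> (Pm *v (SLG *v b))" by (rule sym_inner[OF tP])
    also have "\<dots> = y \<bullet> b" by (simp only: PSb)
    also have "\<dots> = (A *v y) \<bullet> (Ei *v d)" unfolding b_def' by (rule inner_transpose)
    also have "\<dots> = d \<bullet> (Ei *v (A *v y))" by (rule sym_inner[OF tEi])
    finally show ?thesis .
  qed
  have c2: "(SLG *v b) \<bullet> (Pm *v (SLG *v b)) = b \<bullet> (SLG *v b)" by (simp only: PSb inner_commute)
  show ?thesis
    unfolding Si_def[symmetric] Ei_def[symmetric] B_def[symmetric] Bi_def[symmetric] SLG_def[symmetric]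
      d_def[symmetric] xm Ax1 Ax2 qe qm c1 c2 y_def[symmetric]
    using qy by (simp add: Bi_def)
qed


lemma ennreal_eq_pos: "ennreal a = ennreal b \<Longrightarrow> b > 0 \<Longrightarrow> a = b"
  by (metis ennreal_eq_0_iff ennreal_inj ennreal_neg less_imp_le not_le order.strict_iff_not)

theorem mainTheorem2:
  fixes A :: "real ^ 'n ^ 'm"
    and mu_t :: "real ^ 'n" and S_t :: "real ^ 'n ^ 'n"
    and mu_e :: "real ^ 'm" and S_e :: "real ^ 'm ^ 'm"
    and pu :: "real ^ 'm \<Rightarrow> real"
  assumes "pos_def_mat S_t"
    and "pos_def_mat S_e"
    and "rank A = CARD('m)"
    and "distributed (density lborel (\<lambda>x. ennreal (gauss_pdf mu_t S_t x))) lborel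
           (\<lambda>x. A *v x) (\<lambda>u. ennreal (pu u))"
  shows "\<exists>c > 0. AE x in lborel.
           gauss_pdf mu_t S_t x * gauss_pdf mu_e S_e (A *v x) / pu (A *v x)
           = c * gauss_pdf
                   (mu_t + matrix_inv (matrix_inv S_t + transpose A **
                      (matrix_inv S_e - matrix_inv (A ** S_t ** transpose A)) ** A)
                    *v (transpose A *v (matrix_inv S_e *v (mu_e - A *v mu_t))))
                   (matrix_inv (matrix_inv S_t + transpose A **
                      (matrix_inv S_e - matrix_inv (A ** S_t ** transpose A)) ** A))
                   x"
proof -
  note S = assms(1) and E = assms(2)
  have inj: "inj ((*v) (transpose A))"
    using assms(3) full_rank_injective[of "transpose A"] rank_transpose[of A] by simp
  define Pm where "Pm = matrix_inv S_t + transpose A ** (matrix_inv S_e - matrix_inv (A ** S_t ** transpose A)) ** A"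
  define b where "b = transpose A *v (matrix_inv S_e *v (mu_e - A *v mu_t))"
  define SLG where "SLG = matrix_inv Pm"
  define m where "m = mu_t + SLG *v b"
  define K0 where "K0 = (mu_e - A *v mu_t) \<bullet> (matrix_inv S_e *v (mu_e - A *v mu_t)) - b \<bullet> (SLG *v b)"
  have Ppd: "pos_def_mat Pm" unfolding Pm_def by (rule P_pd[OF S E inj])
  have iP: "invertible Pm" by (rule pd_invertible[OF Ppd])
  have SLGinv: "matrix_inv SLG = Pm" unfolding SLG_def by (rule matrix_inv_inv(2)[OF iP])
  have dS: "det S_t > 0" by (rule pd_det_pos[OF S])
  have dE: "det S_e > 0" by (rule pd_det_pos[OF E])
  have dL: "det SLG > 0" unfolding SLG_def by (rule pd_det_pos[OF pd_matrix_inv[OF Ppd]])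
  define Dt where "Dt = sqrt ((2 * pi) ^ CARD('n) * det S_t)"
  define De where "De = sqrt ((2 * pi) ^ CARD('m) * det S_e)"
  define Dl where "Dl = sqrt ((2 * pi) ^ CARD('n) * det SLG)"
  have Dt: "Dt > 0" unfolding Dt_def using dS by simp
  have De: "De > 0" unfolding De_def using dE by simp
  have Dl: "Dl > 0" unfolding Dl_def using dL by simp
  have D: "distr (density lborel (\<lambda>x. ennreal (gauss_pdf mu_t S_t x))) lborel (\<lambda>x. A *v x)
      = density lborel (\<lambda>u. ennreal (pu u))"
    and Pm_meas: "(\<lambda>u. ennreal (pu u)) \<in> borel_measurable borel"
    using assms(4) unfolding distributed_def by auto
  obtain C where C: "C > 0" and AEC: "AE x in lborel. ennreal (pu (A *v x)) = ennreal (C * exp (- (1/2) * ((A *v x - A *v mu_t) \<bullet>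
            (matrix_inv (A ** S_t ** transpose A) *v (A *v x - A *v mu_t)))))"
    using marginal[OF S inj Pm_meas _ D] by auto
  define c where "c = exp (- (1/2) * K0) * Dl / (Dt * De * C)"
  have cpos: "c > 0" unfolding c_def using Dt De Dl C by simp
  show ?thesis
    unfolding Pm_def[symmetric] b_def[symmetric] SLG_def[symmetric] m_def[symmetric]
  proof (intro exI conjI)
    show "c > 0" by (rule cpos)
    show "AE x in lborel. gauss_pdf mu_t S_t x * gauss_pdf mu_e S_e (A *v x) / pu (A *v x) = c * gauss_pdf m SLG x"
      using AEC
    proof eventually_elim
      case (elim x)
      define Qt where "Qt = (x - mu_t) \<bullet> (matrix_inv S_t *v (x - mu_t))"
      define Qe where "Qe = (A *v x - mu_e) \<bullet> (matrix_inv S_e *v (A *v x - mu_e))"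
      define QB where "QB = (A *v x - A *v mu_t) \<bullet> (matrix_inv (A ** S_t ** transpose A) *v (A *v x - A *v mu_t))"
      define R where "R = (x - m) \<bullet> (Pm *v (x - m))"
      have iden: "Qt + Qe - QB = R + K0"
        unfolding Qt_def Qe_def QB_def R_def K0_def m_def SLG_def
        using quad_identity[OF S E inj, of x mu_t mu_e] unfolding Pm_def[symmetric] b_def[symmetric] .
      have pu: "pu (A *v x) = C * exp (- (1/2) * QB)"
        unfolding QB_def using ennreal_eq_pos[OF elim] C by simp
      have ee: "exp (- (1/2) * Qt) * exp (- (1/2) * Qe) = exp (- (1/2) * R) * exp (- (1/2) * K0) * exp (- (1/2) * QB)"
      proof -
        have "- (1/2) * Qt + - (1/2) * Qe = - (1/2) * R + - (1/2) * K0 + - (1/2) * QB" using iden by argo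
        then show ?thesis by (simp only: exp_add[symmetric])
      qed
      have g1: "gauss_pdf mu_t S_t x = exp (- (1/2) * Qt) / Dt" unfolding gauss_pdf_def Qt_def Dt_def ..
      have g2: "gauss_pdf mu_e S_e (A *v x) = exp (- (1/2) * Qe) / De" unfolding gauss_pdf_def Qe_def De_def ..
      have g3: "gauss_pdf m SLG x = exp (- (1/2) * R) / Dl" unfolding gauss_pdf_def R_def Dl_def SLGinv ..
      show ?case unfolding g1 g2 g3 pu c_def
        using Dt De Dl C ee by (simp add: field_simps)
    qed
  qed
qed

end
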